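(* $\mathsf{AP}(R_1,R_2)=\mathsf{AP}(R_1,R_3)=\mathsf{C}$.
   Context: Tuples in $\{0,1\}^4$ are written as strings $abcd$. The relations $R_1,\dots,R_5\subseteq\{0,1\}^4$ are $R_1=\{0000,1000,0100,1100,1010,0110,1001,0101,0011,1011,0111,1111\}$, $R_2=\{0000,1000,0100,1100,1010,0101,0011,1111\}$, $R_3=\{0000,1100,1010,0101,0011,1011,0111,1111\}$, $R_4=\{0000,1100,1010,0101,0011,1111\}$, $R_5=\{0000,1100,1010,0110,1001,0101,0011,1111\}$. For $R,S\subseteq\{0,1\}^4$, a Boolean function $f\colon\{0,1\}^n\to\{0,1\}$ is analogy-preserving relative to $(R,S)$ if for all $\mathbf{a},\mathbf{b},\mathbf{c},\mathbf{d}\in\{0,1\}^n$ with $(a_i,b_i,c_i,d_i)\in R$ for every $i$ and such that $(f(\mathbf{a}),f(\mathbf{b}),f(\mathbf{c}),x)\in S$ for some $x\in\{0,1\}$, we have $(f(\mathbf{a}),f(\mathbf{b}),f(\mathbf{c}),f(\mathbf{d}))\in S$; $\mathsf{AP}(R,S)$ is the set of all such functions of all arities. $\mathsf{C}$ is the set of all constant Boolean functions (of all arities). *)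

theory Defs
  imports Main
begin

text \<open>Tuples in {0,1}^4 are 4-tuples of booleans (False = 0, True = 1).
  An n-ary Boolean function is a function f :: bool list => bool, considered
  only on lists of length n (its arguments).\<close>

type_synonym tup4 = "bool \<times> bool \<times> bool \<times> bool"

definition R1 :: "tup4 set" where
  "R1 = {(False,False,False,False),(True,False,False,False),(False,True,False,False),
         (True,True,False,False),(True,False,True,False),(False,True,True,False),
         (True,False,False,True),(False,True,False,True),(False,False,True,True),
         (True,False,True,True),(False,True,True,True),(True,True,True,True)}"

definition R2 :: "tup4 set" where
  "R2 = {(False,False,False,False),(True,False,False,False),(False,True,False,False),
         (True,True,False,False),(True,False,True,False),(False,True,False,True),
         (False,False,True,True),(True,True,True,True)}"

definition R3 :: "tup4 set" where
  "R3 = {(False,False,False,False),(True,True,False,False),(True,False,True,False),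
         (False,True,False,True),(False,False,True,True),(True,False,True,True),
         (False,True,True,True),(True,True,True,True)}"

definition analogy_preserving :: "tup4 set \<Rightarrow> tup4 set \<Rightarrow> nat \<Rightarrow> (bool list \<Rightarrow> bool) \<Rightarrow> bool" where
  "analogy_preserving R S n f \<longleftrightarrow>
     (\<forall>a b c d. length a = n \<and> length b = n \<and> length c = n \<and> length d = n \<longrightarrow>
        (\<forall>i<n. (a!i, b!i, c!i, d!i) \<in> R) \<longrightarrow>
        (\<exists>x. (f a, f b, f c, x) \<in> S) \<longrightarrow>
        (f a, f b, f c, f d) \<in> S)"

definition constant_fun :: "nat \<Rightarrow> (bool list \<Rightarrow> bool) \<Rightarrow> bool" where
  "constant_fun n f \<longleftrightarrow> (\<exists>v. \<forall>a. length a = n \<longrightarrow> f a = v)"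

end

theory Submission
  imports Defs
begin

lemma nc: assumes "\<not> constant_fun n f"
  obtains u v where "length u = n" "length v = n" "f u = False" "f v = True"
proof -
  have "\<not> (\<forall>a. length a = n \<longrightarrow> f a = False)" "\<not> (\<forall>a. length a = n \<longrightarrow> f a = True)"
    using assms unfolding constant_fun_def by blast+
  then show ?thesis using that by blast
qed

lemma const_ap: assumes "constant_fun n f" and "(False,False,False,False) \<in> S" "(True,True,True,True) \<in> S"
  shows "analogy_preserving R S n f"
  using assms unfolding constant_fun_def analogy_preserving_def
  by (metis (full_types))

lemma ap2: assumes "analogy_preserving R1 R2 n f" shows "constant_fun n f"
proof (rule ccontr)
  assume "\<not> constant_fun n f"
  then obtain u v where uv: "length u = n" "length v = n" "f u = False" "f v = True" by (rule nc)
  have "\<forall>i<n. (v!i, u!i, u!i, v!i) \<in> R1" proof (intro allI impI)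
    fix i show "(v!i, u!i, u!i, v!i) \<in> R1" unfolding R1_def by (cases "u!i"; cases "v!i"; simp)
  qed
  moreover have "(f v, f u, f u, False) \<in> R2" using uv unfolding R2_def by auto
  ultimately have "(f v, f u, f u, f v) \<in> R2" using assms uv unfolding analogy_preserving_def by blast
  then show False using uv unfolding R2_def by auto
qed

lemma ap3: assumes "analogy_preserving R1 R3 n f" shows "constant_fun n f"
proof (rule ccontr)
  assume "\<not> constant_fun n f"
  then obtain u v where uv: "length u = n" "length v = n" "f u = False" "f v = True" by (rule nc)
  have "\<forall>i<n. (u!i, v!i, v!i, u!i) \<in> R1" proof (intro allI impI)
    fix i show "(u!i, v!i, v!i, u!i) \<in> R1" unfolding R1_def by (cases "u!i"; cases "v!i"; simp)
  qed
  moreover have "(f u, f v, f v, True) \<in> R3" using uv unfolding R3_def by auto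
  ultimately have "(f u, f v, f v, f u) \<in> R3" using assms uv unfolding analogy_preserving_def by blast
  then show False using uv unfolding R3_def by auto
qed

theorem mainTheorem12:
  shows "\<forall>n f. (analogy_preserving R1 R2 n f \<longleftrightarrow> constant_fun n f)
                \<and> (analogy_preserving R1 R3 n f \<longleftrightarrow> constant_fun n f)"
proof (intro allI conjI iffI)
  fix n f
  have a: "(False,False,False,False) \<in> R2" "(True,True,True,True) \<in> R2"
    "(False,False,False,False) \<in> R3" "(True,True,True,True) \<in> R3" unfolding R2_def R3_def by simp_all
  show "analogy_preserving R1 R2 n f \<Longrightarrow> constant_fun n f" by (rule ap2)
  show "analogy_preserving R1 R3 n f \<Longrightarrow> constant_fun n f" by (rule ap3)
  show "constant_fun n f \<Longrightarrow> analogy_preserving R1 R2 n f" using const_ap a by blast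
  show "constant_fun n f \<Longrightarrow> analogy_preserving R1 R3 n f" using const_ap a by blast
qed

end
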